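(* Let $d \geq 1$ be an integer and let $v = (v_1,\dots,v_d) \in \mathbb{C}^d$. Then there exists a nonempty subset $S \subseteq [d] = \{1,\dots,d\}$ such that \[ \frac{1}{\sqrt{|S|}} \left| \sum_{j \in S} v_j \right| \geq \frac{\|v\|_2}{8\sqrt{\log_2(d) + 3}}, \] where $\|v\|_2 = \left(\sum_{j=1}^d |v_j|^2\right)^{1/2}$. *)

theory Defs
  imports "HOL-Analysis.Analysis"
begin

end

theory Submission
  imports Defs
begin

lemma ln_step:
  assumes "n \<ge> (2::nat)"
  shows "ln (real (n - 1)) + 1 / real n \<le> ln (real n)"
proof -
  have p: "real (n-1) > 0" "real n > 0" using assms by auto
  have "ln (real (n-1) / real n) \<le> real (n-1) / real n - 1"
    using p by (intro ln_le_minus_one) simp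
  also have "\<dots> = - 1 / real n" using assms p by (simp add: field_simps of_nat_diff)
  finally show ?thesis using p by (simp add: ln_divide_pos)
qed

lemma key:
  fixes a :: "'a \<Rightarrow> real" and M :: real
  assumes "finite I" "\<forall>j\<in>I. a j \<ge> 0" "M \<ge> 0"
    "\<forall>S. S \<subseteq> I \<longrightarrow> S \<noteq> {} \<longrightarrow> sum a S \<le> M * sqrt (real (card S))"
  shows "(\<Sum>j\<in>I. (a j)\<^sup>2) \<le> M\<^sup>2 * (1 + ln (real (card I)))"
  using assms
proof (induction "card I" arbitrary: I rule: less_induct)
  case less
  show ?case
  proof (cases "I = {}")
    case True then show ?thesis by simp
  next
    case False
    have "Min (a ` I) \<in> a ` I" using less.prems(1) False by simp
    then obtain j0 where j0i: "j0 \<in> I" and j0e: "a j0 = Min (a ` I)" by auto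
    have j0: "j0 \<in> I" "\<forall>j\<in>I. a j0 \<le> a j" using j0i j0e less.prems(1) by auto
    define n where "n = card I"
    have n1: "n \<ge> 1" using False less.prems(1) n_def by (simp add: Suc_leI card_gt_0_iff)
    have "real n * a j0 = (\<Sum>j\<in>I. a j0)" by (simp add: n_def)
    also have "\<dots> \<le> sum a I" using j0 by (intro sum_mono) auto
    also have "\<dots> \<le> M * sqrt (real n)" using less.prems(4) False n_def by auto
    finally have h: "real n * a j0 \<le> M * sqrt (real n)" .
    have a0: "a j0 \<ge> 0" using j0 less.prems(2) by auto
    have "(real n * a j0)\<^sup>2 \<le> (M * sqrt (real n))\<^sup>2"
      using h a0 by (intro power_mono) auto
    hence "real n * (real n * (a j0)\<^sup>2) \<le> real n * M\<^sup>2"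
      by (simp add: power_mult_distrib power2_eq_square algebra_simps)
    hence aj: "(a j0)\<^sup>2 \<le> M\<^sup>2 / real n" using n1 by (simp add: field_simps)
    have split: "(\<Sum>j\<in>I. (a j)\<^sup>2) = (a j0)\<^sup>2 + (\<Sum>j\<in>I-{j0}. (a j)\<^sup>2)"
      using less.prems(1) j0 by (simp add: sum.remove)
    show ?thesis
    proof (cases "n = 1")
      case True
      then have "card (I - {j0}) = 0" using j0 n_def less.prems(1) by simp
      then have "I - {j0} = {}" using less.prems(1) by simp
      then have e: "(\<Sum>j\<in>I-{j0}. (a j)\<^sup>2) = 0" by (simp only: sum.empty)
      show ?thesis using split aj e True n_def by simp
    next
      case False
      have cd: "card (I - {j0}) = n - 1" using j0 n_def less.prems(1) by simp
      have IH: "(\<Sum>j\<in>I-{j0}. (a j)\<^sup>2) \<le> M\<^sup>2 * (1 + ln (real (card (I - {j0}))))"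
        apply (rule less.hyps)
        using less.prems j0 n1 False cd n_def by auto
      have "M\<^sup>2 * (1 + ln (real (n-1))) + M\<^sup>2 / real n \<le> M\<^sup>2 * (1 + ln (real n))"
      proof -
        have st: "ln (real (n-1)) + 1 / real n \<le> ln (real n)" using ln_step[of n] False n1 by simp
        have "M\<^sup>2 * (ln (real (n-1)) + 1 / real n) \<le> M\<^sup>2 * ln (real n)"
          by (rule mult_left_mono[OF st]) simp
        moreover have "M\<^sup>2 * (ln (real (n-1)) + 1 / real n) = M\<^sup>2 * ln (real (n-1)) + M\<^sup>2 / real n"
          by (simp add: algebra_simps)
        ultimately show ?thesis by (simp add: algebra_simps)
      qed
      then have "(\<Sum>j\<in>I. (a j)\<^sup>2) \<le> M\<^sup>2 * (1 + ln (real n))"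
        using split aj IH[unfolded cd] by linarith
      then show ?thesis using n_def by simp
    qed
  qed
qed

lemma part:
  fixes v :: "nat \<Rightarrow> complex" and c :: complex
  assumes "cmod c = 1" "R \<ge> 0" "d \<ge> 1"
    "\<forall>S. S \<subseteq> {1..d} \<longrightarrow> S \<noteq> {} \<longrightarrow> cmod (\<Sum>j\<in>S. v j) \<le> R * sqrt (real (card S))"
  shows "(\<Sum>j\<in>{1..d}. if Re (c * v j) > 0 then (Re (c * v j))\<^sup>2 else 0) \<le> R\<^sup>2 * (1 + ln (real d))"
proof -
  define I where "I = {j\<in>{1..d}. Re (c * v j) > 0}"
  have fI: "finite I" by (simp add: I_def)
  have "(\<Sum>j\<in>{1..d}. if Re (c * v j) > 0 then (Re (c * v j))\<^sup>2 else 0) = (\<Sum>j\<in>I. (Re (c * v j))\<^sup>2)"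
    unfolding I_def by (rule sum.inter_filter[symmetric]) simp
  also have "\<dots> \<le> R\<^sup>2 * (1 + ln (real (card I)))"
  proof (rule key[OF fI _ assms(2)])
    show "\<forall>j\<in>I. 0 \<le> Re (c * v j)" by (auto simp: I_def)
    show "\<forall>S\<subseteq>I. S \<noteq> {} \<longrightarrow> (\<Sum>j\<in>S. Re (c * v j)) \<le> R * sqrt (real (card S))"
    proof (intro allI impI)
      fix S assume S: "S \<subseteq> I" "S \<noteq> {}"
      have "(\<Sum>j\<in>S. Re (c * v j)) = Re (c * (\<Sum>j\<in>S. v j))"
        by (simp add: Re_sum sum_distrib_left)
      also have "\<dots> \<le> cmod (c * (\<Sum>j\<in>S. v j))" by (rule complex_Re_le_cmod)
      also have "\<dots> = cmod (\<Sum>j\<in>S. v j)" using assms(1) by (simp add: norm_mult)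
      also have "\<dots> \<le> R * sqrt (real (card S))"
      proof -
        have "S \<subseteq> {1..d}" using S I_def by auto
        thus ?thesis using assms(4) S(2) by blast
      qed
      finally show "(\<Sum>j\<in>S. Re (c * v j)) \<le> R * sqrt (real (card S))" .
    qed
  qed
  also have "\<dots> \<le> R\<^sup>2 * (1 + ln (real d))"
  proof -
    have "card I \<le> d" unfolding I_def
      by (metis (no_types, lifting) card_atLeastAtMost card_mono diff_Suc_1 finite_atLeastAtMost mem_Collect_eq subsetI)
    hence "ln (real (card I)) \<le> ln (real d)"
      using assms(3) by (cases "card I = 0") auto
    thus ?thesis by (simp add: mult_left_mono)
  qed
  finally show ?thesis .
qed

theorem mainTheorem1:
  fixes d :: nat and v :: "nat \<Rightarrow> complex"
  assumes "d \<ge> 1"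
  shows "\<exists>S. S \<subseteq> {1..d} \<and> S \<noteq> {} \<and>
    (1 / sqrt (real (card S))) * cmod (\<Sum>j\<in>S. v j)
      \<ge> sqrt (\<Sum>j=1..d. (cmod (v j))\<^sup>2) / (8 * sqrt (log 2 (real d) + 3))"
proof (rule ccontr)
  assume neg: "\<not> ?thesis"
  define N where "N = (\<Sum>j=1..d. (cmod (v j))\<^sup>2)"
  define L where "L = log 2 (real d) + 3"
  define R where "R = sqrt N / (8 * sqrt L)"
  have N0: "N \<ge> 0" unfolding N_def by (simp add: sum_nonneg)
  have lnd: "ln (real d) \<ge> 0" using assms by simp
  have ln2: "0 < ln (2::real)" "ln (2::real) \<le> 1" using ln_le_minus_one[of 2] by auto
  have lg: "ln (real d) \<le> log 2 (real d)"
    unfolding log_def using lnd ln2 by (simp add: le_divide_eq mult_left_le)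
  have L0: "L > 0" unfolding L_def using lg lnd by linarith
  have R0: "R \<ge> 0" unfolding R_def using N0 L0 by simp
  have R2: "R\<^sup>2 = N / (64 * L)" unfolding R_def using N0 L0
    by (simp add: power_divide power_mult_distrib)
  have H: "\<forall>S. S \<subseteq> {1..d} \<longrightarrow> S \<noteq> {} \<longrightarrow> cmod (\<Sum>j\<in>S. v j) \<le> R * sqrt (real (card S))"
  proof (intro allI impI)
    fix S :: "nat set" assume S: "S \<subseteq> {1..d}" "S \<noteq> {}"
    have fS: "finite S" using S finite_subset by blast
    have cS: "sqrt (real (card S)) > 0" using fS S by (simp add: card_gt_0_iff)
    have "(1 / sqrt (real (card S))) * cmod (\<Sum>j\<in>S. v j) < R"
      using neg S unfolding R_def N_def L_def by (meson not_le)
    thus "cmod (\<Sum>j\<in>S. v j) \<le> R * sqrt (real (card S))"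
      using cS by (simp add: field_simps)
  qed
  define P where "P = (\<lambda>c::complex. \<Sum>j\<in>{1..d}. if Re (c * v j) > 0 then (Re (c * v j))\<^sup>2 else 0)"
  have Pb: "\<And>c. cmod c = 1 \<Longrightarrow> P c \<le> R\<^sup>2 * (1 + ln (real d))"
    unfolding P_def using part[OF _ R0 assms H] by blast
  have "N = P 1 + P (-1) + P (-\<i>) + P \<i>"
  proof -
    have "\<And>j. (cmod (v j))\<^sup>2 = (if Re (1 * v j) > 0 then (Re (1 * v j))\<^sup>2 else 0)
       + (if Re (-1 * v j) > 0 then (Re (-1 * v j))\<^sup>2 else 0)
       + (if Re (-\<i> * v j) > 0 then (Re (-\<i> * v j))\<^sup>2 else 0)
       + (if Re (\<i> * v j) > 0 then (Re (\<i> * v j))\<^sup>2 else 0)"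
      by (simp add: cmod_power2)
    thus ?thesis unfolding N_def P_def by (simp add: sum.distrib)
  qed
  also have "\<dots> \<le> 4 * (R\<^sup>2 * (1 + ln (real d)))"
    using Pb[of 1] Pb[of "-1"] Pb[of "-\<i>"] Pb[of "\<i>"] by simp
  also have "\<dots> = N * (1 + ln (real d)) / (16 * L)" using R2 L0 by (simp add: field_simps)
  finally have A: "N \<le> N * (1 + ln (real d)) / (16 * L)" .
  have B: "(1 + ln (real d)) / (16 * L) < 1" using L0 lg lnd unfolding L_def by (simp add: field_simps)
  have "N = 0"
  proof (rule ccontr)
    assume "N \<noteq> 0" hence "N > 0" using N0 by simp
    hence "N * ((1 + ln (real d)) / (16 * L)) < N * 1" using B by (intro mult_strict_left_mono)
    hence "N * (1 + ln (real d)) / (16 * L) < N" by (simp only: times_divide_eq_right mult_1_right)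
    thus False using A by linarith
  qed
  hence "(1 / sqrt (real (card {1::nat}))) * cmod (\<Sum>j\<in>{1}. v j)
      \<ge> sqrt (\<Sum>j=1..d. (cmod (v j))\<^sup>2) / (8 * sqrt (log 2 (real d) + 3))"
    unfolding N_def by simp
  moreover have "{1::nat} \<subseteq> {1..d}" using assms by simp
  ultimately show False using neg by blast
qed

end
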